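(* Let $F, F'$ be minimally unsatisfiable clause-sets with $F \to^{*}_{\mathrm{sDP}} F'$. Then $\mathrm{minvdeg}(F') \ge \mathrm{minvdeg}(F)$.
   Context: Literals come with a fixed-point-free involution $x \mapsto \overline{x}$; variables are positive literals. A clause is a finite set $C$ of literals with $C \cap \overline{C} = \emptyset$; a clause-set is a finite set of clauses. A clause-set is minimally unsatisfiable if it is unsatisfiable but becomes satisfiable upon removing any clause. $\mathrm{ld}_F(x)$ is the number of clauses of $F$ containing literal $x$; $\mathrm{vdeg}_F(v) = \mathrm{ld}_F(v) + \mathrm{ld}_F(\overline{v})$; $\mathrm{minvdeg}(F) = \min_{v \in \mathrm{var}(F)} \mathrm{vdeg}_F(v)$ if $F$ has variables, and $+\infty$ otherwise. A variable $v$ is singular in $F$ if $\min(\mathrm{ld}_F(v), \mathrm{ld}_F(\overline{v})) = 1$. DP-reduction on $v$: $\mathrm{DP}_v(F) = \{C \in F : v \notin \mathrm{var}(C)\} \cup \{(C \cup D) \setminus \{v, \overline{v}\} : C, D \in F,\ C \cap \overline{D} = \{v\}\}$. $F \to_{\mathrm{sDP}} F'$ holds if $F' = \mathrm{DP}_v(F)$ for some singular variable $v$ of $F$; $\to^{*}_{\mathrm{sDP}}$ is its reflexive-transitive closure. *)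

theory Defs
  imports Main "HOL-Library.Extended_Nat"
begin

datatype 'v lit = Pos 'v | Neg 'v

fun comp :: "'v lit \<Rightarrow> 'v lit" where
  "comp (Pos v) = Neg v"
| "comp (Neg v) = Pos v"

fun var_of :: "'v lit \<Rightarrow> 'v" where
  "var_of (Pos v) = v"
| "var_of (Neg v) = v"

type_synonym 'v clause = "'v lit set"
type_synonym 'v cls = "'v lit set set"

definition comp_set :: "'v clause \<Rightarrow> 'v clause" where
  "comp_set C = comp ` C"

definition is_clause :: "'v clause \<Rightarrow> bool" where
  "is_clause C \<longleftrightarrow> finite C \<and> C \<inter> comp_set C = {}"

definition is_clause_set :: "'v cls \<Rightarrow> bool" where
  "is_clause_set F \<longleftrightarrow> finite F \<and> (\<forall>C\<in>F. is_clause C)"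

definition vars_cl :: "'v clause \<Rightarrow> 'v set" where
  "vars_cl C = var_of ` C"

definition vars :: "'v cls \<Rightarrow> 'v set" where
  "vars F = (\<Union>C\<in>F. vars_cl C)"

fun lit_val :: "('v \<Rightarrow> bool) \<Rightarrow> 'v lit \<Rightarrow> bool" where
  "lit_val \<phi> (Pos v) = \<phi> v"
| "lit_val \<phi> (Neg v) = (\<not> \<phi> v)"

definition satisfiable :: "'v cls \<Rightarrow> bool" where
  "satisfiable F \<longleftrightarrow> (\<exists>\<phi>. \<forall>C\<in>F. \<exists>x\<in>C. lit_val \<phi> x)"

definition minimally_unsat :: "'v cls \<Rightarrow> bool" where
  "minimally_unsat F \<longleftrightarrow> is_clause_set F \<and> \<not> satisfiable F \<and>
     (\<forall>C\<in>F. satisfiable (F - {C}))"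

definition ld :: "'v cls \<Rightarrow> 'v lit \<Rightarrow> nat" where
  "ld F x = card {C\<in>F. x \<in> C}"

definition vdeg :: "'v cls \<Rightarrow> 'v \<Rightarrow> nat" where
  "vdeg F v = ld F (Pos v) + ld F (Neg v)"

definition minvdeg :: "'v cls \<Rightarrow> enat" where
  "minvdeg F = (if vars F = {} then \<infinity> else enat (Min (vdeg F ` vars F)))"

definition singular :: "'v cls \<Rightarrow> 'v \<Rightarrow> bool" where
  "singular F v \<longleftrightarrow> v \<in> vars F \<and> min (ld F (Pos v)) (ld F (Neg v)) = 1"

definition DP :: "'v \<Rightarrow> 'v cls \<Rightarrow> 'v cls" where
  "DP v F = {C\<in>F. v \<notin> vars_cl C} \<union>
     {(C \<union> D) - {Pos v, Neg v} | C D. C \<in> F \<and> D \<in> F \<and> C \<inter> comp_set D = {Pos v}}"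

definition sDP_step :: "'v cls \<Rightarrow> 'v cls \<Rightarrow> bool" where
  "sDP_step F F' \<longleftrightarrow> (\<exists>v. singular F v \<and> F' = DP v F)"

end

theory Submission
  imports Defs
begin

lemma comp_comp[simp]: "comp (comp x) = x" by (cases x) auto
lemma var_comp[simp]: "var_of (comp x) = var_of x" by (cases x) auto
lemma comp_neq[simp]: "comp x \<noteq> x" by (cases x) auto
lemma comp_neq'[simp]: "x \<noteq> comp x" by (cases x) auto
lemma lit_val_comp[simp]: "lit_val \<phi> (comp x) = (\<not> lit_val \<phi> x)" by (cases x) auto
lemma comp_inj[simp]: "(comp x = comp y) = (x = y)" by (metis comp_comp)
lemma var_eq: "var_of z = var_of x \<Longrightarrow> z = x \<or> z = comp x"
  by (cases x; cases z) auto
lemma mem_comp_set: "y \<in> comp_set D \<longleftrightarrow> comp y \<in> D"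
  unfolding comp_set_def by (metis comp_comp image_iff)
lemma clause_no_comp: assumes "is_clause C" "x \<in> C" shows "comp x \<notin> C"
proof
  assume "comp x \<in> C"
  then have "x \<in> comp_set C" by (simp add: mem_comp_set)
  with assms show False unfolding is_clause_def by blast
qed
lemma var_notin: "var_of x \<notin> vars_cl C \<Longrightarrow> x \<notin> C"
  unfolding vars_cl_def by auto
lemma swap_clash: "D \<inter> comp_set C = comp_set (C \<inter> comp_set D)"
  by (auto simp: mem_comp_set)
lemma comp_set_single[simp]: "comp_set {a} = {comp a}" unfolding comp_set_def by auto

lemma in_vars: "x \<in> C \<Longrightarrow> var_of x \<in> vars_cl C" unfolding vars_cl_def by auto

definition set_lit :: "('v \<Rightarrow> bool) \<Rightarrow> 'v lit \<Rightarrow> ('v \<Rightarrow> bool)" where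
  "set_lit \<phi> x = \<phi>(var_of x := (case x of Pos _ \<Rightarrow> True | Neg _ \<Rightarrow> False))"

lemma set_lit_same: "lit_val (set_lit \<phi> x) x" unfolding set_lit_def by (cases x) auto
lemma set_lit_other: "var_of y \<noteq> var_of x \<Longrightarrow> lit_val (set_lit \<phi> x) y = lit_val \<phi> y"
  unfolding set_lit_def by (cases y) auto

lemma flip:
  assumes "\<forall>C\<in>F. x \<in> C \<or> (\<exists>z\<in>C. var_of z \<noteq> var_of x \<and> lit_val \<phi> z)"
  shows "satisfiable F"
  unfolding satisfiable_def
proof (intro exI ballI)
  fix C assume "C \<in> F"
  with assms show "\<exists>z\<in>C. lit_val (set_lit \<phi> x) z"
    using set_lit_same set_lit_other by metis
qed

lemma pure:
  assumes mu: "minimally_unsat F" and C: "C \<in> F" "x \<in> C"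
  shows "\<exists>C'\<in>F. comp x \<in> C'"
proof (rule ccontr)
  assume no: "\<not> ?thesis"
  from mu C obtain \<phi> where phi: "\<forall>E\<in>F - {C}. \<exists>z\<in>E. lit_val \<phi> z"
    unfolding minimally_unsat_def satisfiable_def by blast
  have "\<forall>E\<in>F. x \<in> E \<or> (\<exists>z\<in>E. var_of z \<noteq> var_of x \<and> lit_val \<phi> z)"
  proof
    fix E assume E: "E \<in> F"
    show "x \<in> E \<or> (\<exists>z\<in>E. var_of z \<noteq> var_of x \<and> lit_val \<phi> z)"
    proof (cases "x \<in> E")
      case False
      with C have "E \<in> F - {C}" using E by auto
      with phi obtain z where z: "z \<in> E" "lit_val \<phi> z" by blast
      have "var_of z \<noteq> var_of x"
        using var_eq[of z x] z no E False by blast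
      with z show ?thesis by blast
    qed simp
  qed
  then have "satisfiable F" by (rule flip)
  with mu show False unfolding minimally_unsat_def by blast
qed

locale sing =
  fixes F :: "'v cls" and C0 :: "'v clause" and p :: "'v lit"
  assumes mu: "minimally_unsat F" and C0: "C0 \<in> F" and pC0: "p \<in> C0"
    and uniq: "\<And>C. C \<in> F \<Longrightarrow> p \<in> C \<Longrightarrow> C = C0"
begin

abbreviation "N \<equiv> {D\<in>F. comp p \<in> D}"
abbreviation "K \<equiv> {C\<in>F. var_of p \<notin> vars_cl C}"
abbreviation "R D \<equiv> (C0 \<union> D) - {p, comp p}"

lemma cs: "is_clause_set F" using mu unfolding minimally_unsat_def by blast
lemma unsat: "\<not> satisfiable F" using mu unfolding minimally_unsat_def by blast
lemma finF: "finite F" using cs unfolding is_clause_set_def by blast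
lemma clF: "C \<in> F \<Longrightarrow> is_clause C" using cs unfolding is_clause_set_def by blast
lemma q_C0: "comp p \<notin> C0" using clause_no_comp[OF clF[OF C0] pC0] .
lemma C0_N: "C0 \<notin> N" using q_C0 by blast
lemma p_N: "D \<in> N \<Longrightarrow> p \<notin> D"
proof -
  assume D: "D \<in> N"
  have "comp (comp p) \<notin> D" using clause_no_comp[OF clF[of D]] D by blast
  then show ?thesis by simp
qed

lemma split: "C \<in> F \<Longrightarrow> C \<in> K \<or> C = C0 \<or> C \<in> N"
  unfolding vars_cl_def using var_eq uniq by fastforce

lemma K_var: assumes "C \<in> K" "z \<in> C" shows "var_of z \<noteq> var_of p"
proof
  assume "var_of z = var_of p"
  then have "var_of p \<in> vars_cl C" using assms(2) unfolding vars_cl_def by (metis imageI)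
  with assms(1) show False by simp
qed

lemma falsify:
  assumes "D \<in> F" "\<forall>C\<in>F-{D}. \<exists>z\<in>C. lit_val \<phi> z" "z \<in> D"
  shows "\<not> lit_val \<phi> z"
  using assms unsat unfolding satisfiable_def by blast

lemma L:
  assumes D1: "D1 \<in> N" and phi: "\<forall>C\<in>F-{D1}. \<exists>z\<in>C. lit_val \<phi> z"
    and z: "z \<in> C0" "z \<noteq> p" "lit_val \<phi> z"
  shows False
proof -
  have "\<forall>C\<in>F. comp p \<in> C \<or> (\<exists>z\<in>C. var_of z \<noteq> var_of (comp p) \<and> lit_val \<phi> z)"
  proof
    fix C assume C: "C \<in> F"
    show "comp p \<in> C \<or> (\<exists>z\<in>C. var_of z \<noteq> var_of (comp p) \<and> lit_val \<phi> z)"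
    proof (cases "comp p \<in> C")
      case False
      with split[OF C] have "C \<in> K \<or> C = C0" by blast
      then show ?thesis
      proof
        assume K: "C \<in> K"
        then have "C \<in> F - {D1}" using D1 False by auto
        with phi obtain y where "y \<in> C" "lit_val \<phi> y" by blast
        with K_var[OF K] show ?thesis by auto
      next
        assume "C = C0"
        moreover have "var_of z \<noteq> var_of p" using var_eq[of z p] z q_C0 by auto
        ultimately show ?thesis using z by auto
      qed
    qed simp
  qed
  then have "satisfiable F" by (rule flip)
  with unsat show False by blast
qed

lemma getphi: "D \<in> F \<Longrightarrow> \<exists>\<phi>. \<forall>C\<in>F-{D}. \<exists>z\<in>C. lit_val \<phi> z"
  using mu unfolding minimally_unsat_def satisfiable_def by blast

lemma clash: assumes D: "D \<in> N" shows "C0 \<inter> comp_set D = {p}"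
proof -
  have "p \<in> C0 \<inter> comp_set D" using pC0 D mem_comp_set by auto
  moreover have "y = p" if y: "y \<in> C0" "y \<in> comp_set D" for y
  proof (rule ccontr)
    assume "y \<noteq> p"
    from D obtain \<phi> where phi: "\<forall>C\<in>F-{D}. \<exists>z\<in>C. lit_val \<phi> z" using getphi by blast
    have "\<not> lit_val \<phi> (comp y)" using falsify[OF _ phi] D y mem_comp_set by blast
    then have "lit_val \<phi> y" by simp
    from L[OF D phi y(1) \<open>y \<noteq> p\<close> this] show False .
  qed
  ultimately show ?thesis by blast
qed

lemma Rsat_other:
  assumes D: "D \<in> N" and phi: "\<forall>C\<in>F-{D}. \<exists>z\<in>C. lit_val \<phi> z"
    and z: "z \<in> R D" "lit_val \<phi> z"
  shows False
proof -
  have "z \<notin> D" using falsify[OF _ phi] D z by blast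
  with z show False using L[OF D phi] by blast
qed

lemma inj: "inj_on R N"
proof (rule inj_onI, rule ccontr)
  fix D1 D2 assume D: "D1 \<in> N" "D2 \<in> N" "R D1 = R D2" "D1 \<noteq> D2"
  from D obtain \<phi> where phi: "\<forall>C\<in>F-{D1}. \<exists>z\<in>C. lit_val \<phi> z" using getphi by blast
  then obtain z where z: "z \<in> D2" "lit_val \<phi> z" using D by auto
  have "\<not> lit_val \<phi> (comp p)" using falsify[OF _ phi] D by blast
  then have "z \<noteq> comp p" using z by auto
  moreover have "z \<noteq> p" using p_N[OF D(2)] z by auto
  ultimately have "z \<in> R D1" using D z by auto
  from Rsat_other[OF D(1) phi this z(2)] show False .
qed

lemma disj: "D \<in> N \<Longrightarrow> R D \<notin> K"
proof
  assume D: "D \<in> N" and K: "R D \<in> K"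
  from D obtain \<phi> where phi: "\<forall>C\<in>F-{D}. \<exists>z\<in>C. lit_val \<phi> z" using getphi by blast
  have "R D \<noteq> D" using D by auto
  then have "R D \<in> F - {D}" using K by auto
  then obtain z where z: "z \<in> R D" "lit_val \<phi> z" using phi by blast
  from Rsat_other[OF D phi z] show False .
qed



lemma DP_eq: "DP (var_of p) F = K \<union> R ` N"
proof -
  let ?v = "var_of p"
  let ?S = "{(C \<union> D) - {Pos ?v, Neg ?v} | C D. C \<in> F \<and> D \<in> F \<and> C \<inter> comp_set D = {Pos ?v}}"
  have pq: "{Pos ?v, Neg ?v} = {p, comp p}" by (cases p) auto
  have "?S \<subseteq> R ` N"
  proof
    fix X assume "X \<in> ?S"
    then obtain C D where X: "X = (C \<union> D) - {Pos ?v, Neg ?v}" "C \<in> F" "D \<in> F"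
      "C \<inter> comp_set D = {Pos ?v}" by blast
    then have a: "Pos ?v \<in> C" "Neg ?v \<in> D" using mem_comp_set[of "Pos ?v" D] by auto
    show "X \<in> R ` N"
    proof (cases p)
      case (Pos v)
      then have "C = C0" using uniq a X by auto
      moreover have "D \<in> N" using a X Pos by auto
      ultimately show ?thesis using X pq by auto
    next
      case (Neg v)
      then have "D = C0" using uniq a X by auto
      moreover have "C \<in> N" using a X Neg by auto
      ultimately show ?thesis using X pq by (auto simp: Un_commute)
    qed
  qed
  moreover have "R ` N \<subseteq> ?S"
  proof
    fix X assume "X \<in> R ` N"
    then obtain D where D: "D \<in> N" "X = R D" by blast
    note cl = clash[OF D(1)]
    show "X \<in> ?S"
    proof (cases p)
      case (Pos v)
      then show ?thesis using D cl C0 pq by auto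
    next
      case (Neg v)
      have "D \<inter> comp_set C0 = {Pos v}" using swap_clash[of D C0] cl Neg by simp
      then have "X = (D \<union> C0) - {Pos ?v, Neg ?v} \<and> D \<in> F \<and> C0 \<in> F \<and> D \<inter> comp_set C0 = {Pos ?v}"
        using D C0 pq Neg by (auto simp: Un_commute)
      then show ?thesis by blast
    qed
  qed
  ultimately have "?S = R ` N" by blast
  then show ?thesis unfolding DP_def by simp
qed

lemma R_clause: assumes D: "D \<in> N" shows "is_clause (R D)"
proof -
  have fin: "finite (R D)" using clF[OF C0] clF[of D] D unfolding is_clause_def by auto
  have "False" if y: "y \<in> R D" "comp y \<in> R D" for y
  proof (cases "y \<in> C0")
    case True
    then have "comp y \<notin> C0" using clause_no_comp[OF clF[OF C0]] by blast
    then have "comp y \<in> D" using y by auto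
    then have "y \<in> C0 \<inter> comp_set D" using True mem_comp_set by auto
    then show False using clash[OF D] y by auto
  next
    case False
    then have yD: "y \<in> D" using y by auto
    then have "comp y \<notin> D" using clause_no_comp[OF clF[of D]] D by blast
    then have "comp y \<in> C0" using y by auto
    moreover have "comp y \<in> comp_set D" using yD by (simp add: mem_comp_set)
    ultimately have "comp y = p" using clash[OF D] by auto
    then show False using y by auto
  qed
  then have "R D \<inter> comp_set (R D) = {}" using mem_comp_set by blast
  with fin show ?thesis unfolding is_clause_def by blast
qed

lemma R_sat:
  assumes D: "D \<in> N" and a: "a \<in> C0" "lit_val \<phi> a" and b: "b \<in> D" "lit_val \<phi> b"
  shows "\<exists>z\<in>R D. lit_val \<phi> z"
proof (cases "a = p")
  case True
  then have "b \<noteq> comp p" using a b by auto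
  moreover have "b \<noteq> p" using p_N[OF D] b by auto
  ultimately show ?thesis using b by auto
next
  case False
  then show ?thesis using a q_C0 by auto
qed

lemma KN: "C \<in> K \<Longrightarrow> C \<notin> N" using in_vars[of "comp p"] by force
lemma C0K: "C0 \<notin> K" using in_vars[OF pC0] by auto

lemma G_mu: "minimally_unsat (K \<union> R ` N)"
proof -
  let ?G = "K \<union> R ` N"
  have "is_clause_set ?G" unfolding is_clause_set_def
    using finF clF R_clause by auto
  moreover have "\<not> satisfiable ?G"
  proof
    assume "satisfiable ?G"
    then obtain \<phi> where phi: "\<forall>C\<in>?G. \<exists>z\<in>C. lit_val \<phi> z" unfolding satisfiable_def by blast
    have Ksat: "\<exists>z\<in>C. var_of z \<noteq> var_of p \<and> lit_val \<phi> z" if "C \<in> K" for C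
      using phi that K_var by blast
    show False
    proof (cases "\<forall>D\<in>N. \<exists>z\<in>D. z \<noteq> comp p \<and> lit_val \<phi> z")
      case True
      have "\<forall>C\<in>F. p \<in> C \<or> (\<exists>z\<in>C. var_of z \<noteq> var_of p \<and> lit_val \<phi> z)"
      proof
        fix C assume C: "C \<in> F"
        show "p \<in> C \<or> (\<exists>z\<in>C. var_of z \<noteq> var_of p \<and> lit_val \<phi> z)"
        proof -
          { assume CN: "C \<in> N"
            then obtain z where z: "z \<in> C" "z \<noteq> comp p" "lit_val \<phi> z" using True by blast
            moreover have "z \<noteq> p" using p_N[OF CN] z by auto
            ultimately have ?thesis using var_eq[of z p] by auto }
          then show ?thesis using split[OF C] pC0 Ksat by blast
        qed
      qed
      then have "satisfiable F" by (rule flip)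
      with unsat show False by blast
    next
      case False
      then obtain D1 where D1: "D1 \<in> N" "\<forall>z\<in>D1. z \<noteq> comp p \<longrightarrow> \<not> lit_val \<phi> z" by blast
      then obtain z where z: "z \<in> R D1" "lit_val \<phi> z" using phi by blast
      then have zC0: "z \<in> C0" "z \<noteq> p" using D1 by auto
      then have vz: "var_of z \<noteq> var_of (comp p)" using var_eq[of z p] q_C0 by auto
      have "\<forall>C\<in>F. comp p \<in> C \<or> (\<exists>z\<in>C. var_of z \<noteq> var_of (comp p) \<and> lit_val \<phi> z)"
        using split Ksat zC0 vz z by fastforce
      then have "satisfiable F" by (rule flip)
      with unsat show False by blast
    qed
  qed
  moreover have "\<forall>E\<in>?G. satisfiable (?G - {E})"
  proof
    fix E assume E: "E \<in> ?G"
    show "satisfiable (?G - {E})"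
    proof (cases "E \<in> K")
      case True
      then obtain \<phi> where phi: "\<forall>C\<in>F-{E}. \<exists>z\<in>C. lit_val \<phi> z" using getphi by blast
      have "C0 \<noteq> E" using True C0K by auto
      then have a: "\<exists>a\<in>C0. lit_val \<phi> a" using phi C0 by blast
      have "\<exists>z\<in>X. lit_val \<phi> z" if X: "X \<in> ?G - {E}" for X
      proof (cases "X \<in> K")
        case True then show ?thesis using phi X by auto
      next
        case False
        then obtain D where D: "D \<in> N" "X = R D" using X by blast
        then have "D \<noteq> E" using \<open>E \<in> K\<close> KN by blast
        then obtain b where "b \<in> D" "lit_val \<phi> b" using phi D by blast
        then show ?thesis using R_sat[OF D(1)] a D by blast
      qed
      then show ?thesis unfolding satisfiable_def by blast
    next
      case False
      then obtain D1 where D1: "D1 \<in> N" "E = R D1" using E by blast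
      then obtain \<phi> where phi: "\<forall>C\<in>F-{D1}. \<exists>z\<in>C. lit_val \<phi> z" using getphi by blast
      have a: "\<exists>a\<in>C0. lit_val \<phi> a" using phi C0 C0_N D1 by blast
      have "\<exists>z\<in>X. lit_val \<phi> z" if X: "X \<in> ?G - {E}" for X
      proof (cases "X \<in> K")
        case True then show ?thesis using phi X KN D1 by blast
      next
        case False
        then obtain D where D: "D \<in> N" "X = R D" using X by blast
        then have "D \<noteq> D1" using X D1 by auto
        then obtain b where "b \<in> D" "lit_val \<phi> b" using phi D by blast
        then show ?thesis using R_sat[OF D(1)] a D by blast
      qed
      then show ?thesis unfolding satisfiable_def by blast
    qed
  qed
  ultimately show ?thesis unfolding minimally_unsat_def by blast
qed


abbreviation "G \<equiv> K \<union> R ` N"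

lemma finN: "finite N" using finF by auto
lemma finK: "finite K" using finF by auto

lemma ldG: assumes x: "var_of x \<noteq> var_of p"
  shows "ld G x = card {C\<in>K. x \<in> C} + (if x \<in> C0 then card N else card {D\<in>N. x \<in> D})"
proof -
  have xpq: "x \<noteq> p" "x \<noteq> comp p" using x by auto
  have e1: "{C\<in>G. x \<in> C} = {C\<in>K. x \<in> C} \<union> R ` {D\<in>N. x \<in> R D}" by auto
  have e2: "{D\<in>N. x \<in> R D} = (if x \<in> C0 then N else {D\<in>N. x \<in> D})" using xpq by auto
  have d: "{C\<in>K. x \<in> C} \<inter> R ` {D\<in>N. x \<in> R D} = {}" using disj by blast
  have i: "inj_on R {D\<in>N. x \<in> R D}" using inj by (rule inj_on_subset) auto
  have "ld G x = card {C\<in>K. x \<in> C} + card (R ` {D\<in>N. x \<in> R D})"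
    unfolding ld_def e1 using finF d by (intro card_Un_disjoint) auto
  also have "card (R ` {D\<in>N. x \<in> R D}) = card {D\<in>N. x \<in> R D}" using i by (rule card_image)
  finally show ?thesis using e2 by simp
qed

lemma ldF: assumes x: "var_of x \<noteq> var_of p"
  shows "ld F x = card {C\<in>K. x \<in> C} + (if x \<in> C0 then 1 else 0) + card {D\<in>N. x \<in> D}"
proof -
  have d: "{C\<in>K. x \<in> C} \<inter> {D\<in>N. x \<in> D} = {}" using KN by blast
  have fins: "finite {C\<in>K. x \<in> C}" "finite {D\<in>N. x \<in> D}" using finF by auto
  have c: "card ({C\<in>K. x \<in> C} \<union> {D\<in>N. x \<in> D}) = card {C\<in>K. x \<in> C} + card {D\<in>N. x \<in> D}"
    using fins d by (rule card_Un_disjoint)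
  have nC0: "C0 \<notin> {C\<in>K. x \<in> C} \<union> {D\<in>N. x \<in> D}" using C0K C0_N by blast
  have sp: "{C\<in>F. x \<in> C} = (if x \<in> C0 then insert C0 ({C\<in>K. x \<in> C} \<union> {D\<in>N. x \<in> D})
      else {C\<in>K. x \<in> C} \<union> {D\<in>N. x \<in> D})"
    using split C0 by auto
  show ?thesis
  proof (cases "x \<in> C0")
    case True
    then show ?thesis unfolding ld_def sp using c nC0 fins by simp
  next
    case False
    then show ?thesis unfolding ld_def sp using c by simp
  qed
qed

lemma ldF_p: "ld F p = 1"
proof -
  have "{C\<in>F. p \<in> C} = {C0}" using uniq C0 pC0 by blast
  then show ?thesis unfolding ld_def by simp
qed

lemma vdeg_v: "vdeg F (var_of p) = 1 + card N"
proof -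
  have "ld F (comp p) = card N" unfolding ld_def by simp
  then show ?thesis using ldF_p unfolding vdeg_def by (cases p) auto
qed

lemma lit_eq: "var_of x \<noteq> var_of p \<Longrightarrow> x \<notin> C0 \<Longrightarrow> ld G x = ld F x"
  using ldG ldF by simp

lemma lit_in: assumes x: "var_of x \<noteq> var_of p" and xC: "x \<in> C0"
  shows "ld G x \<ge> ld F x \<or> ld G x + ld G (comp x) \<ge> 1 + card N"
proof (cases "card {D\<in>N. x \<in> D} < card N")
  case True
  then show ?thesis using ldG[OF x] ldF[OF x] xC by simp
next
  case False
  have sub: "{D\<in>N. x \<in> D} \<subseteq> N" by blast
  have "card {D\<in>N. x \<in> D} = card N" using False card_mono[OF finN sub] by linarith
  then have NN: "{D\<in>N. x \<in> D} = N" using card_subset_eq[OF finN sub] by blast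
  obtain C' where C': "C' \<in> F" "comp x \<in> C'" using pure[OF mu C0 xC] by blast
  have "C' \<noteq> C0" using C' clause_no_comp[OF clF[OF C0] xC] by auto
  moreover have "C' \<notin> N"
  proof
    assume "C' \<in> N"
    then have "x \<in> C'" using NN by blast
    then show False using C' clause_no_comp[OF clF[OF C'(1)]] by blast
  qed
  ultimately have "C' \<in> {C\<in>K. comp x \<in> C}" using split[OF C'(1)] C' by blast
  then have "card {C\<in>K. comp x \<in> C} \<ge> 1"
    using finK by (metis (no_types, lifting) One_nat_def Suc_leI card_gt_0_iff empty_iff finite_subset mem_Collect_eq subsetI)
  moreover have "ld G (comp x) = card {C\<in>K. comp x \<in> C} + card {D\<in>N. comp x \<in> D}"
    using ldG[of "comp x"] x clause_no_comp[OF clF[OF C0] xC] by simp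
  ultimately show ?thesis using ldG[OF x] xC by simp
qed

lemma varsG: assumes w: "w \<in> vars G" shows "w \<in> vars F" "w \<noteq> var_of p"
proof -
  obtain X where X: "X \<in> G" "w \<in> vars_cl X" using w unfolding vars_def by blast
  then obtain z where z: "z \<in> X" "var_of z = w" unfolding vars_cl_def by blast
  have "w \<in> vars F \<and> w \<noteq> var_of p" using X(1)
  proof
    assume "X \<in> K"
    then show ?thesis using X K_var z unfolding vars_def by blast
  next
    assume "X \<in> R ` N"
    then obtain D where D: "D \<in> N" "X = R D" by blast
    then have "z \<in> C0 \<or> z \<in> D" "z \<noteq> p" "z \<noteq> comp p" using z by auto
    then show ?thesis using var_eq[of z p] z D C0 in_vars unfolding vars_def by blast
  qed
  then show "w \<in> vars F" "w \<noteq> var_of p" by auto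
qed

lemma vdegG: assumes w: "w \<in> vars G"
  shows "vdeg G w \<ge> vdeg F w \<or> vdeg G w \<ge> vdeg F (var_of p)"
proof -
  have wv: "var_of (Pos w) \<noteq> var_of p" "var_of (Neg w) \<noteq> var_of p" using varsG(2)[OF w] by auto
  have cl: "\<not> (Pos w \<in> C0 \<and> Neg w \<in> C0)" using clause_no_comp[OF clF[OF C0], of "Pos w"] by auto
  show ?thesis
  proof (cases "Pos w \<in> C0")
    case True
    then have "Neg w \<notin> C0" using cl by blast
    then show ?thesis using lit_eq[OF wv(2)] lit_in[OF wv(1) True] vdeg_v unfolding vdeg_def by auto
  next
    case False
    show ?thesis
    proof (cases "Neg w \<in> C0")
      case True
      then show ?thesis using lit_eq[OF wv(1) False] lit_in[OF wv(2) True] vdeg_v unfolding vdeg_def by auto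
    next
      case F2: False
      then show ?thesis using lit_eq[OF wv(1) False] lit_eq[OF wv(2) F2] unfolding vdeg_def by auto
    qed
  qed
qed

lemma finvars: "finite (vars F)"
  unfolding vars_def vars_cl_def using finF clF unfolding is_clause_def by auto

lemma minvdeg_step: "minvdeg G \<ge> minvdeg F"
proof (cases "vars G = {}")
  case True then show ?thesis unfolding minvdeg_def by simp
next
  case False
  have vF: "var_of p \<in> vars F" using in_vars[OF pC0] C0 unfolding vars_def by blast
  then have ne: "vars F \<noteq> {}" by blast
  have sub: "vars G \<subseteq> vars F" using varsG by blast
  have finG: "finite (vars G)" using finite_subset[OF sub finvars] .
  have "Min (vdeg F ` vars F) \<le> Min (vdeg G ` vars G)"
  proof (rule Min.boundedI)
    show "finite (vdeg G ` vars G)" using finG by simp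
    show "vdeg G ` vars G \<noteq> {}" using False by simp
    fix a assume "a \<in> vdeg G ` vars G"
    then obtain w where w: "w \<in> vars G" "a = vdeg G w" by blast
    have wF: "w \<in> vars F" using sub w by blast
    have m1: "Min (vdeg F ` vars F) \<le> vdeg F w" using finvars wF by (intro Min_le) auto
    have m2: "Min (vdeg F ` vars F) \<le> vdeg F (var_of p)" using finvars vF by (intro Min_le) auto
    show "Min (vdeg F ` vars F) \<le> a" using vdegG[OF w(1)] m1 m2 w(2) by linarith
  qed
  then show ?thesis unfolding minvdeg_def using False ne by simp
qed

end

lemma step:
  assumes mu: "minimally_unsat F" and st: "sDP_step F G"
  shows "minimally_unsat G \<and> minvdeg G \<ge> minvdeg F"
proof -
  obtain v where v: "singular F v" "G = DP v F" using st unfolding sDP_step_def by blast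
  then have "min (ld F (Pos v)) (ld F (Neg v)) = 1" unfolding singular_def by blast
  then obtain p where p: "var_of p = v" "ld F p = 1"
    by (metis min_def var_of.simps)
  then have "card {C\<in>F. p \<in> C} = 1" unfolding ld_def by simp
  then obtain C0 where C0: "{C\<in>F. p \<in> C} = {C0}" by (rule card_1_singletonE)
  then interpret sing F C0 p using mu by unfold_locales auto
  show ?thesis using G_mu minvdeg_step DP_eq v p by simp
qed

theorem lemma5p4:
  fixes F F' :: "'v cls"
  assumes "minimally_unsat F" and "minimally_unsat F'"
    and "sDP_step\<^sup>*\<^sup>* F F'"
  shows "minvdeg F' \<ge> minvdeg F"
proof -
  have "minimally_unsat F' \<and> minvdeg F' \<ge> minvdeg F"
    using assms(3)
  proof (induction rule: rtranclp_induct)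
    case base then show ?case using assms(1) by simp
  next
    case (step y z)
    then show ?case using Submission.step[of y z] order_trans by blast
  qed
  then show ?thesis by blast
qed

end
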